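(* Let $G$ be a finite group of odd order. Then $\Gamma_{G,H}$ admits a perfect code for every normal subgroup $H$ of $G$.
   Context: For a normal subgroup $H$ of a finite group $G$ with identity $e$, the subgroup sum graph $\Gamma_{G,H}$ is the simple undirected graph with vertex set $G$ in which distinct vertices $x,y$ are adjacent if and only if $xy\in H\setminus\{e\}$. A perfect code in a graph is a set $C$ of vertices that is independent and such that every vertex not in $C$ is adjacent to exactly one vertex of $C$. *)

theory Defs
  imports "HOL-Algebra.Algebra"
begin

definition ssg_adj :: "('a, 'b) monoid_scheme \<Rightarrow> 'a set \<Rightarrow> 'a \<Rightarrow> 'a \<Rightarrow> bool" where
  "ssg_adj G H x y \<longleftrightarrow> x \<in> carrier G \<and> y \<in> carrier G \<and> x \<noteq> y \<and>
     x \<otimes>\<^bsub>G\<^esub> y \<in> H - {\<one>\<^bsub>G\<^esub>}"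

definition perfect_code :: "'a set \<Rightarrow> ('a \<Rightarrow> 'a \<Rightarrow> bool) \<Rightarrow> 'a set \<Rightarrow> bool" where
  "perfect_code V adj C \<longleftrightarrow> C \<subseteq> V \<and>
     (\<forall>x\<in>C. \<forall>y\<in>C. \<not> adj x y) \<and>
     (\<forall>v\<in>V - C. \<exists>!c. c \<in> C \<and> adj v c)"

end

theory Submission
  imports Defs "HOL-Algebra.Multiplicative_Group"
begin

lemma (in group) canc1: "a \<in> carrier G \<Longrightarrow> b \<in> carrier G \<Longrightarrow> c \<in> carrier G \<Longrightarrow> a \<otimes> inv b \<otimes> (b \<otimes> c) = a \<otimes> c"
  by (simp add: m_assoc[symmetric]) (simp add: m_assoc)
lemma (in group) canc2: "a \<in> carrier G \<Longrightarrow> b \<in> carrier G \<Longrightarrow> inv a \<otimes> (a \<otimes> b) = b"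
  by (simp add: m_assoc[symmetric])
lemma (in group) canc3: "a \<in> carrier G \<Longrightarrow> b \<in> carrier G \<Longrightarrow> a \<otimes> inv b \<otimes> b = a"
  by (simp add: m_assoc)

context normal
begin

lemma comm_in: "x \<in> carrier G \<Longrightarrow> y \<in> carrier G \<Longrightarrow> x \<otimes> y \<in> H \<Longrightarrow> y \<otimes> x \<in> H"
proof -
  assume x: "x \<in> carrier G" and y: "y \<in> carrier G" and h: "x \<otimes> y \<in> H"
  have "inv x \<otimes> (x \<otimes> y) \<otimes> x \<in> H" using inv_op_closed1[OF x h] .
  also have "inv x \<otimes> (x \<otimes> y) \<otimes> x = y \<otimes> x"
    using x y by (simp add: m_assoc[symmetric])
  finally show ?thesis .
qed

lemma sq_in:
  assumes fin: "finite (carrier G)" and odd: "odd (order G)"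
    and x: "x \<in> carrier G" and h: "x \<otimes> x \<in> H"
  shows "x \<in> H"
proof -
  obtain k where k: "order G = Suc (2 * k)" using odd oddE by (metis Suc_eq_plus1)
  have "x [^] order G = \<one>" using pow_order_eq_1[OF x] .
  have sq: "x [^] (2::nat) = x \<otimes> x" using x by (simp add: numeral_2_eq_2)
  have "x [^] order G = x \<otimes> (x [^] (2::nat)) [^] k" using x k
    by (simp only: k nat_pow_Suc2[OF x] nat_pow_pow[OF x])
  hence "x \<otimes> (x \<otimes> x) [^] k = \<one>" using sq `x [^] order G = \<one>` by simp
  hence "inv ((x \<otimes> x) [^] k) = x" using x by (intro inv_equality) auto
  hence "x = inv ((x \<otimes> x) [^] k)" by simp
  moreover have "(x \<otimes> x) [^] k \<in> H" using h
    by (induct k) (auto simp: one_closed m_closed)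
  ultimately show ?thesis by (metis m_inv_closed)
qed

lemma main:
  assumes fin: "finite (carrier G)" and odd: "odd (order G)"
  shows "\<exists>C. perfect_code (carrier G) (ssg_adj G H) C"
proof -
  obtain f :: "'a \<Rightarrow> nat" where inj: "inj_on f (carrier G)"
    using finite_imp_inj_to_nat_seg[OF fin] by blast
  define s where "s x = (SOME y. y \<in> carrier G \<and> y \<otimes> inv x \<in> H)" for x
  define r where "r x = (if x \<in> H then \<one> else if f (s x) \<le> f (s (inv x)) then s x
      else inv (s (inv x)))" for x
  have sm: "\<And>x y. x \<in> H \<Longrightarrow> y \<in> H \<Longrightarrow> x \<otimes> y \<in> H"
    using subgroup.m_closed[OF subgroup_axioms] by blast
  have si: "\<And>x. x \<in> H \<Longrightarrow> inv x \<in> H"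
    using subgroup.m_inv_closed[OF subgroup_axioms] by blast
  have invH: "\<And>x. x \<in> carrier G \<Longrightarrow> inv x \<in> H \<Longrightarrow> x \<in> H"
    by (metis m_inv_closed inv_inv)
  have L1: "s x \<in> carrier G \<and> s x \<otimes> inv x \<in> H" if x: "x \<in> carrier G" for x
  proof -
    have "x \<in> carrier G \<and> x \<otimes> inv x \<in> H" using x by (simp add: one_closed)
    thus ?thesis unfolding s_def by (rule someI)
  qed
  have L2: "s x = s y" if x: "x \<in> carrier G" and y: "y \<in> carrier G" and h: "x \<otimes> inv y \<in> H" for x y
  proof -
    have "z \<otimes> inv x \<in> H \<longleftrightarrow> z \<otimes> inv y \<in> H" if z: "z \<in> carrier G" for z
    proof
      assume "z \<otimes> inv x \<in> H"
      hence "(z \<otimes> inv x) \<otimes> (x \<otimes> inv y) \<in> H" using h by (rule sm)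
      thus "z \<otimes> inv y \<in> H" using x y z by (simp add: canc1)
    next
      assume a: "z \<otimes> inv y \<in> H"
      have "inv (x \<otimes> inv y) \<in> H" using h by (rule si)
      hence "y \<otimes> inv x \<in> H" using x y by (simp add: inv_mult_group)
      with a have "(z \<otimes> inv y) \<otimes> (y \<otimes> inv x) \<in> H" by (rule sm)
      thus "z \<otimes> inv x \<in> H" using x y z by (simp add: canc1)
    qed
    thus ?thesis unfolding s_def by (metis (no_types, lifting))
  qed
  have L3: "r x \<in> carrier G \<and> r x \<otimes> inv x \<in> H" if x: "x \<in> carrier G" for x
  proof (cases "x \<in> H")
    case True thus ?thesis using x by (simp add: r_def si)
  next
    case False
    have a: "s (inv x) \<in> carrier G" "s (inv x) \<otimes> x \<in> H" using L1[of "inv x"] x by auto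
    hence "x \<otimes> s (inv x) \<in> H" using x comm_in by blast
    hence "inv (x \<otimes> s (inv x)) \<in> H" by (rule si)
    hence "inv (s (inv x)) \<otimes> inv x \<in> H" using x a by (simp add: inv_mult_group)
    thus ?thesis using False L1[OF x] a by (simp add: r_def)
  qed
  have L4: "r x = r y" if x: "x \<in> carrier G" and y: "y \<in> carrier G" and h: "x \<otimes> inv y \<in> H" for x y
  proof -
    have "x \<in> H \<longleftrightarrow> y \<in> H"
    proof
      assume "x \<in> H"
      hence "inv x \<otimes> (x \<otimes> inv y) \<in> H" using h by (simp add: sm si)
      hence "inv y \<in> H" using x y by (simp add: canc2)
      thus "y \<in> H" using y invH by blast
    next
      assume "y \<in> H"
      hence "(x \<otimes> inv y) \<otimes> y \<in> H" using h by (simp add: sm)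
      thus "x \<in> H" using x y by (simp add: canc3)
    qed
    moreover have "s x = s y" using L2 x y h by blast
    moreover have "s (inv x) = s (inv y)"
    proof -
      have "inv y \<otimes> x \<in> H" using comm_in h x y by blast
      hence "inv (inv y \<otimes> x) \<in> H" by (rule si)
      hence "inv x \<otimes> inv (inv y) \<in> H" using x y by (simp add: inv_mult_group)
      thus ?thesis using L2 x y by blast
    qed
    ultimately show ?thesis by (simp add: r_def)
  qed
  have L5: "r (inv x) = inv (r x)" if x: "x \<in> carrier G" for x
  proof (cases "x \<in> H")
    case True thus ?thesis using x by (simp add: r_def si)
  next
    case False
    hence nH: "inv x \<notin> H" using invH x by blast
    define a where "a = s x"
    define b where "b = s (inv x)"
    have a: "a \<in> carrier G" "a \<otimes> inv x \<in> H" using L1[OF x] a_def by auto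
    have b: "b \<in> carrier G" "b \<otimes> x \<in> H" using L1[of "inv x"] x b_def by auto
    have rx: "r x = (if f a \<le> f b then a else inv b)" using False by (simp add: r_def a_def b_def)
    have rix: "r (inv x) = (if f b \<le> f a then b else inv a)" using nH x
      by (simp add: r_def a_def b_def)
    have "f a \<noteq> f b"
    proof
      assume "f a = f b"
      hence ab: "a = b" using inj a b by (meson inj_onD)
      have "inv (a \<otimes> inv x) \<otimes> (a \<otimes> x) \<in> H" using a b ab by (simp add: sm si)
      hence "x \<otimes> x \<in> H" using a x
        by (simp add: inv_mult_group canc1)
      hence "x \<in> H" using sq_in[OF fin odd x] by blast
      thus False using False by blast
    qed
    thus ?thesis using rx rix a b by auto
  qed
  have L6: "r y = inv (r x)" if x: "x \<in> carrier G" and y: "y \<in> carrier G" and h: "x \<otimes> y \<in> H" for x y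
  proof -
    have "y \<otimes> inv (inv x) \<in> H" using comm_in[OF x y h] x by simp
    hence "r y = r (inv x)" using L4 x y by blast
    thus ?thesis using L5 x by simp
  qed
  define C where "C = {x \<in> carrier G. r x = x}"
  have "perfect_code (carrier G) (ssg_adj G H) C"
    unfolding perfect_code_def
  proof (intro conjI ballI)
    show "C \<subseteq> carrier G" by (auto simp: C_def)
  next
    fix c d assume c: "c \<in> C" and d: "d \<in> C"
    show "\<not> ssg_adj G H c d"
    proof
      assume adj: "ssg_adj G H c d"
      hence cd: "c \<otimes> d \<in> H" "c \<otimes> d \<noteq> \<one>" by (auto simp: ssg_adj_def)
      have cG: "c \<in> carrier G" "r c = c" and dG: "d \<in> carrier G" "r d = d" using c d by (auto simp: C_def)
      have "d = inv c" using L6[OF cG(1) dG(1) cd(1)] cG dG by simp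
      thus False using cd cG by simp
    qed
  next
    fix v assume v: "v \<in> carrier G - C"
    hence vG: "v \<in> carrier G" and nv: "r v \<noteq> v" by (auto simp: C_def)
    define c where "c = inv (r v)"
    have rv: "r v \<in> carrier G" "r v \<otimes> inv v \<in> H" using L3[OF vG] by auto
    have cG: "c \<in> carrier G" using rv by (simp add: c_def)
    have vc: "v \<otimes> c \<in> H"
    proof -
      have "inv (r v \<otimes> inv v) \<in> H" using rv by (simp add: si)
      thus ?thesis using rv vG by (simp add: c_def inv_mult_group)
    qed
    have rc: "r c = c" using L6[OF vG cG vc] by (simp add: c_def)
    have cC: "c \<in> C" using cG rc by (simp add: C_def)
    have "v \<noteq> c" using rc nv by auto
    moreover have "v \<otimes> c \<noteq> \<one>"
    proof
      assume "v \<otimes> c = \<one>"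
      hence "inv c = v" using vG cG by (intro inv_equality) auto
      thus False using nv rv by (simp add: c_def)
    qed
    ultimately have adj: "ssg_adj G H v c" using vG cG vc by (simp add: ssg_adj_def)
    show "\<exists>!c. c \<in> C \<and> ssg_adj G H v c"
    proof (rule ex1I[of _ c])
      show "c \<in> C \<and> ssg_adj G H v c" using cC adj by blast
    next
      fix c' assume h: "c' \<in> C \<and> ssg_adj G H v c'"
      hence c'G: "c' \<in> carrier G" "r c' = c'" "v \<otimes> c' \<in> H" by (auto simp: C_def ssg_adj_def)
      show "c' = c" using L6[OF vG c'G(1) c'G(3)] c'G(2) by (simp add: c_def)
    qed
  qed
  thus ?thesis by blast
qed

end

theorem corollary3p3:
  fixes G :: "('a, 'b) monoid_scheme" and H :: "'a set"
  assumes "group G" and "finite (carrier G)" and "odd (order G)"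
    and "H \<lhd> G"
  shows "\<exists>C. perfect_code (carrier G) (ssg_adj G H) C"
  using normal.main[OF assms(4) assms(2,3)] .

end
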